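(* Suppose a resolvable Steiner system $S(n,k-1,2)$ exists, and let $H_1,\ldots,H_t$ be graphs each of order less than $k$, where $t\le (n-1)/(k-2)$. Then $f(H_1,\ldots,H_t)\le n$.
   Context: All graphs are finite and simple; the order of a graph is its number of vertices. A graph $G$ is $(H_1,\ldots,H_t)$-full if every vertex of $G$ belongs to an induced subgraph of $G$ isomorphic to $H_i$, for each $i$. $f(H_1,\ldots,H_t)$ denotes the minimum order of an $(H_1,\ldots,H_t)$-full graph. A Steiner system $S(n,k-1,2)$ is a $(k-1)$-uniform hypergraph on $n$ vertices in which every pair of vertices lies in exactly one edge; it is resolvable if its edge set can be partitioned into perfect matchings (sets of pairwise disjoint edges whose union is the whole vertex set). *)

theory Defs
  imports Complex_Main "HOL-Library.Disjoint_Sets"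
begin

type_synonym 'a graph = "'a set \<times> 'a set set"

definition verts :: "'a graph \<Rightarrow> 'a set" where "verts G = fst G"
definition edges :: "'a graph \<Rightarrow> 'a set set" where "edges G = snd G"

definition is_graph :: "'a graph \<Rightarrow> bool" where
  "is_graph G \<longleftrightarrow> finite (verts G) \<and> verts G \<noteq> {} \<and>
     (\<forall>e\<in>edges G. e \<subseteq> verts G \<and> card e = 2)"

definition order :: "'a graph \<Rightarrow> nat" where "order G = card (verts G)"

definition induced_iso :: "'a graph \<Rightarrow> 'a set \<Rightarrow> 'b graph \<Rightarrow> bool" where
  "induced_iso G S H \<longleftrightarrow> S \<subseteq> verts G \<and>
     (\<exists>\<phi>. bij_betw \<phi> S (verts H) \<and>
        (\<forall>x\<in>S. \<forall>y\<in>S. {x, y} \<in> edges G \<longleftrightarrow> {\<phi> x, \<phi> y} \<in> edges H))"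

definition full :: "'a graph \<Rightarrow> 'b graph list \<Rightarrow> bool" where
  "full G Hs \<longleftrightarrow> (\<forall>v\<in>verts G. \<forall>H\<in>set Hs. \<exists>S. v \<in> S \<and> induced_iso G S H)"

text \<open>f(H_1,...,H_t): minimum order of a full graph (vertices taken from nat,
  which loses no generality for finite graphs).\<close>
definition fmin :: "'b graph list \<Rightarrow> nat" where
  "fmin Hs = (LEAST m. \<exists>G :: nat graph. is_graph G \<and> full G Hs \<and> order G = m)"

definition steiner_system :: "'a set \<Rightarrow> 'a set set \<Rightarrow> nat \<Rightarrow> nat \<Rightarrow> bool" where
  "steiner_system X B n r \<longleftrightarrow> finite X \<and> card X = n \<and>
     (\<forall>b\<in>B. b \<subseteq> X \<and> card b = r) \<and>
     (\<forall>x\<in>X. \<forall>y\<in>X. x \<noteq> y \<longrightarrow> (\<exists>!b. b \<in> B \<and> x \<in> b \<and> y \<in> b))"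

definition perfect_matching :: "'a set \<Rightarrow> 'a set set \<Rightarrow> bool" where
  "perfect_matching X M \<longleftrightarrow> disjoint M \<and> \<Union>M = X"

definition resolvable :: "'a set \<Rightarrow> 'a set set \<Rightarrow> bool" where
  "resolvable X B \<longleftrightarrow> (\<exists>P. partition_on B P \<and> (\<forall>M\<in>P. perfect_matching X M))"

end

theory Submission
  imports Defs
begin

lemma transfer_fmin:
  fixes G :: "'a graph" and Hs :: "'b graph list"
  assumes "is_graph G" "full G Hs"
  shows "fmin Hs \<le> order G"
proof -
  let ?V = "verts G"
  have fin: "finite ?V" using assms(1) by (simp add: is_graph_def)
  obtain h where h: "bij_betw h {0..<card ?V} ?V" using ex_bij_betw_nat_finite[OF fin] by blast
  define g where "g = inv_into {0..<card ?V} h"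
  have g: "bij_betw g ?V {0..<card ?V}" unfolding g_def by (rule bij_betw_inv_into[OF h])
  have ginj: "inj_on g ?V" using g bij_betw_def by blast
  define G' :: "nat graph" where "G' = (g ` ?V, (\<lambda>e. g ` e) ` edges G)"
  have vG': "verts G' = g ` ?V" and eG': "edges G' = (\<lambda>e. g ` e) ` edges G"
    by (simp_all add: G'_def verts_def edges_def)
  have Esub: "\<forall>e\<in>edges G. e \<subseteq> ?V \<and> card e = 2" using assms(1) by (simp add: is_graph_def)
  have edge_iff: "{g x, g y} \<in> edges G' \<longleftrightarrow> {x,y} \<in> edges G" if "x \<in> ?V" "y \<in> ?V" for x y
  proof
    assume "{g x, g y} \<in> edges G'"
    then obtain e where e: "e \<in> edges G" "{g x, g y} = g ` e" using eG' by auto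
    have "g ` e = g ` {x,y}" using e by simp
    moreover have "e \<subseteq> ?V" using Esub e(1) by blast
    moreover have "{x,y} \<subseteq> ?V" using that by simp
    ultimately have "e = {x,y}" using inj_on_image_eq_iff[OF ginj] by blast
    then show "{x,y} \<in> edges G" using e by simp
  next
    assume "{x,y} \<in> edges G"
    then have "g ` {x,y} \<in> (\<lambda>e. g ` e) ` edges G" by (rule imageI)
    then show "{g x, g y} \<in> edges G'" using eG' by simp
  qed
  have "is_graph G'"
    unfolding is_graph_def
  proof (intro conjI ballI)
    show "finite (verts G')" using vG' fin by simp
    show "verts G' \<noteq> {}" using vG' assms(1) by (simp add: is_graph_def)
    fix e assume "e \<in> edges G'"
    then obtain e0 where e0: "e0 \<in> edges G" "e = g ` e0" using eG' by auto
    then have e0V: "e0 \<subseteq> ?V" and "card e0 = 2" using Esub by auto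
    show "e \<subseteq> verts G'" using e0 e0V vG' by auto
    show "card e = 2" using e0 card_image[OF inj_on_subset[OF ginj e0V]] \<open>card e0 = 2\<close> by simp
  qed
  moreover have "full G' Hs"
    unfolding full_def
  proof (intro ballI)
    fix v' H assume v': "v' \<in> verts G'" and H: "H \<in> set Hs"
    then obtain v where v: "v \<in> ?V" "v' = g v" using vG' by auto
    from assms(2) v H obtain S where S: "v \<in> S" "induced_iso G S H" unfolding full_def by blast
    then obtain \<phi> where SV: "S \<subseteq> ?V" and \<phi>: "bij_betw \<phi> S (verts H)"
      and \<phi>e: "\<forall>x\<in>S. \<forall>y\<in>S. {x, y} \<in> edges G \<longleftrightarrow> {\<phi> x, \<phi> y} \<in> edges H"
      unfolding induced_iso_def by blast
    have gS: "inj_on g S" using inj_on_subset[OF ginj SV] .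
    define gi where "gi = inv_into S g"
    have gib: "bij_betw gi (g ` S) S" unfolding gi_def
      by (rule bij_betw_inv_into) (simp add: bij_betw_def gS)
    have gi: "gi (g x) = x" if "x \<in> S" for x using gS that by (simp add: gi_def)
    have "bij_betw (\<phi> \<circ> gi) (g ` S) (verts H)" using bij_betw_trans[OF gib \<phi>] .
    moreover have "\<forall>x\<in>g ` S. \<forall>y\<in>g ` S. {x, y} \<in> edges G' \<longleftrightarrow> {(\<phi> \<circ> gi) x, (\<phi> \<circ> gi) y} \<in> edges H"
    proof (intro ballI)
      fix x y assume "x \<in> g ` S" "y \<in> g ` S"
      then obtain a b where ab: "a \<in> S" "b \<in> S" "x = g a" "y = g b" by auto
      then show "{x, y} \<in> edges G' \<longleftrightarrow> {(\<phi> \<circ> gi) x, (\<phi> \<circ> gi) y} \<in> edges H"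
        using edge_iff[of a b] SV \<phi>e gi by auto
    qed
    moreover have "g ` S \<subseteq> verts G'" using SV vG' by auto
    ultimately have "induced_iso G' (g ` S) H" unfolding induced_iso_def by blast
    then show "\<exists>S. v' \<in> S \<and> induced_iso G' S H" using v S by blast
  qed
  moreover have "order G' = order G"
    unfolding order_def using vG' card_image[OF ginj] by simp
  ultimately have "is_graph G' \<and> full G' Hs \<and> order G' = order G" by blast
  then show ?thesis unfolding fmin_def by (intro Least_le) blast
qed

lemma surj_exists:
  assumes "finite A" "finite B" "B \<noteq> {}" "card B \<le> card A"
  shows "\<exists>f. f ` A = B"
proof -
  obtain f where f: "f ` B \<subseteq> A" "inj_on f B" using card_le_inj[OF assms(2,1,4)] by blast
  obtain b0 where b0: "b0 \<in> B" using assms(3) by blast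
  define g where "g y = (if y \<in> f ` B then inv_into B f y else b0)" for y
  have "g ` A = B"
  proof
    show "g ` A \<subseteq> B" using b0 by (auto simp: g_def inv_into_into)
    show "B \<subseteq> g ` A"
    proof
      fix w assume w: "w \<in> B"
      then have "g (f w) = w" using f by (simp add: g_def)
      then show "w \<in> g ` A" using f w by (metis image_eqI image_subset_iff)
    qed
  qed
  then show ?thesis by blast
qed

theorem theorem2p2:
  fixes X :: "'a set" and B :: "'a set set" and Hs :: "'b graph list" and n k :: nat
  assumes "k \<ge> 3"
    and "steiner_system X B n (k - 1)" and "resolvable X B"
    and "\<forall>H\<in>set Hs. is_graph H \<and> order H < k"
    and "real (length Hs) \<le> (real n - 1) / (real k - 2)"
  shows "fmin Hs \<le> n"
proof -
  from assms(2) have finX: "finite X" and cardX: "card X = n"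
    and Bb: "\<forall>b\<in>B. b \<subseteq> X \<and> card b = k-1"
    and uniq: "\<forall>x\<in>X. \<forall>y\<in>X. x\<noteq>y \<longrightarrow> (\<exists>!b. b\<in>B \<and> x\<in>b \<and> y\<in>b)"
    by (simp_all add: steiner_system_def)
  obtain P where P: "partition_on B P" and PM: "\<forall>M\<in>P. perfect_matching X M"
    using assms(3) resolvable_def by blast
  have UP: "\<Union>P = B" and disjP: "disjoint P" using P by (simp_all add: partition_on_def)
  define t where "t = length Hs"
  have n1: "n \<ge> 1"
  proof (rule ccontr)
    assume "\<not> n \<ge> 1" then have "n = 0" by simp
    then have "(real n - 1)/(real k - 2) < 0" using assms(1) by (simp add: divide_neg_pos)
    then show False using assms(5) by simp
  qed
  have "X \<noteq> {}" using cardX n1 by auto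
  then obtain x0 where x0: "x0 \<in> X" by blast
  have "B \<subseteq> Pow X" using Bb by auto
  then have finB: "finite B" using finX by (simp add: finite_subset)
  define Bx where "Bx = {b\<in>B. x0\<in>b}"
  have finBx: "finite Bx" using finB by (simp add: Bx_def)
  have cardBx: "card Bx * (k-2) = n-1"
  proof -
    have disj: "(b-{x0}) \<inter> (b'-{x0}) = {}" if "b\<in>Bx" "b'\<in>Bx" "b\<noteq>b'" for b b'
    proof (rule ccontr)
      assume "(b-{x0}) \<inter> (b'-{x0}) \<noteq> {}"
      then obtain y where y: "y \<in> b" "y \<in> b'" "y \<noteq> x0" by blast
      have "y \<in> X" using y that Bb Bx_def by auto
      have "\<exists>!b. b\<in>B \<and> x0\<in>b \<and> y\<in>b" using uniq x0 \<open>y \<in> X\<close> y(3) by simp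
      moreover have "b\<in>B \<and> x0\<in>b \<and> y\<in>b" "b'\<in>B \<and> x0\<in>b' \<and> y\<in>b'" using that y unfolding Bx_def by auto
      ultimately show False using that(3) by blast
    qed
    have un: "(\<Union>b\<in>Bx. b-{x0}) = X - {x0}"
    proof
      show "(\<Union>b\<in>Bx. b-{x0}) \<subseteq> X - {x0}" using Bb Bx_def by auto
      show "X - {x0} \<subseteq> (\<Union>b\<in>Bx. b-{x0})"
      proof
        fix y assume "y \<in> X - {x0}"
        then obtain b where "b\<in>B" "x0\<in>b" "y\<in>b" "y \<noteq> x0" using uniq x0 by blast
        then show "y \<in> (\<Union>b\<in>Bx. b-{x0})" unfolding Bx_def by blast
      qed
    qed
    have "card (\<Union>b\<in>Bx. b-{x0}) = (\<Sum>b\<in>Bx. card (b-{x0}))"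
      by (rule card_UN_disjoint) (use finBx finX Bb Bx_def disj in \<open>auto intro: finite_subset\<close>)
    also have "\<dots> = (\<Sum>b\<in>Bx. k-2)"
      by (rule sum.cong) (use Bb Bx_def in auto)
    also have "\<dots> = card Bx * (k-2)" by simp
    finally show ?thesis using un cardX x0 finX by simp
  qed
  have "P \<subseteq> Pow B" using UP by auto
  then have finP: "finite P" using finB by (simp add: finite_subset)
  have "card Bx \<le> card P"
  proof -
    define cl where "cl b = (SOME M. M\<in>P \<and> b\<in>M)" for b
    have cl: "cl b \<in> P \<and> b \<in> cl b" if "b \<in> Bx" for b
    proof -
      have "\<exists>M. M\<in>P \<and> b\<in>M" using that UP Bx_def by auto
      then show ?thesis unfolding cl_def by (rule someI_ex)
    qed
    have "inj_on cl Bx"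
    proof
      fix b b' assume bb: "b \<in> Bx" "b' \<in> Bx" "cl b = cl b'"
      let ?M = "cl b"
      have "disjoint ?M" using PM cl bb by (simp add: perfect_matching_def)
      moreover have "b \<in> ?M" "b' \<in> ?M" using cl bb by auto
      moreover have "x0 \<in> b" "x0 \<in> b'" using bb Bx_def by auto
      ultimately show "b = b'" by (meson disjnt_iff pairwiseD)
    qed
    moreover have "cl ` Bx \<subseteq> P" using cl by auto
    ultimately show ?thesis using card_inj_on_le finP by blast
  qed
  have tle: "t \<le> card P"
  proof -
    have r1: "real (card Bx) * real (k-2) = real (n-1)" using cardBx by (metis of_nat_mult)
    have r2: "real (k-2) = real k - 2" using assms(1) by (simp add: of_nat_diff)
    have r3: "real (n-1) = real n - 1" using n1 by (simp add: of_nat_diff)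
    have "real (card Bx) * (real k - 2) = real n - 1" using r1 r2 r3 by simp
    then have "(real n - 1) / (real k - 2) = real (card Bx)" using assms(1) by (simp add: field_simps)
    then have "t \<le> card Bx" using assms(5) t_def by simp
    then show ?thesis using \<open>card Bx \<le> card P\<close> by simp
  qed
  obtain c where c: "c ` {..<t} \<subseteq> P" "inj_on c {..<t}"
    using card_le_inj[of "{..<t}" P] finP tle by auto
  have cdisj: "i = j" if "i < t" "j < t" "b \<in> c i" "b \<in> c j" for i j b
  proof (rule ccontr)
    assume "i \<noteq> j"
    then have "c i \<noteq> c j" using c(2) that by (meson inj_on_def lessThan_iff)
    moreover have "c i \<in> P" "c j \<in> P" using c that by auto
    ultimately have "disjnt (c i) (c j)" using disjP by (meson pairwiseD)
    then show False using that by (meson disjnt_iff)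
  qed
  have cB: "b \<in> B" if "i < t" "b \<in> c i" for i b using c UP that by auto
  define \<sigma> :: "nat \<Rightarrow> 'a set \<Rightarrow> 'a \<Rightarrow> 'b" where "\<sigma> i b = (SOME f. f ` b = verts (Hs!i))" for i b
  have \<sigma>: "\<sigma> i b ` b = verts (Hs!i)" if "i<t" "b \<in> c i" for i b
  proof -
    have H: "is_graph (Hs!i)" "order (Hs!i) < k" using assms(4) that t_def by auto
    have "\<exists>f. f ` b = verts (Hs!i)"
    proof (rule surj_exists)
      show "finite b" using cB[OF that] Bb finX finite_subset by blast
      show "finite (verts (Hs!i))" "verts (Hs!i) \<noteq> {}" using H by (auto simp: is_graph_def)
      show "card (verts (Hs!i)) \<le> card b" using H cB[OF that] Bb by (auto simp: order_def)
    qed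
    then show ?thesis unfolding \<sigma>_def by (rule someI_ex)
  qed
  define E where "E = {{x,y} | x y. x\<in>X \<and> y\<in>X \<and> x\<noteq>y \<and>
      (\<exists>i<t. \<exists>b\<in>c i. x\<in>b \<and> y\<in>b \<and> \<sigma> i b x \<noteq> \<sigma> i b y \<and> {\<sigma> i b x, \<sigma> i b y} \<in> edges (Hs!i))}"
  define G where "G = (X, E)"
  have vG: "verts G = X" and eG: "edges G = E" by (simp_all add: G_def verts_def edges_def)
  have Echar: "{x,y} \<in> E \<longleftrightarrow> \<sigma> i b x \<noteq> \<sigma> i b y \<and> {\<sigma> i b x, \<sigma> i b y} \<in> edges (Hs!i)"
    if ib: "i<t" "b\<in>c i" and xy: "x\<in>b" "y\<in>b" "x\<noteq>y" for i b x y
  proof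
    have bX: "b \<subseteq> X" using cB[OF ib] Bb by auto
    assume "\<sigma> i b x \<noteq> \<sigma> i b y \<and> {\<sigma> i b x, \<sigma> i b y} \<in> edges (Hs!i)"
    then show "{x,y} \<in> E" unfolding E_def using ib xy bX by blast
  next
    have bX: "b \<subseteq> X" using cB[OF ib] Bb by auto
    assume "{x,y} \<in> E"
    then obtain x' y' i' b' where e: "{x,y} = {x',y'}" "i' < t" "b' \<in> c i'" "x'\<in>b'" "y'\<in>b'"
      "\<sigma> i' b' x' \<noteq> \<sigma> i' b' y'" "{\<sigma> i' b' x', \<sigma> i' b' y'} \<in> edges (Hs!i')"
      unfolding E_def by blast
    have sw: "(x' = x \<and> y' = y) \<or> (x' = y \<and> y' = x)" using e(1) by (metis doubleton_eq_iff)
    have "x \<in> b'" "y \<in> b'" using sw e by auto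
    moreover have "b \<in> B" "b' \<in> B" using cB ib e by auto
    moreover have "x \<in> X" "y \<in> X" using xy bX by auto
    ultimately have "b' = b"
    proof -
      assume a: "x \<in> b'" "y \<in> b'" "b \<in> B" "b' \<in> B" "x \<in> X" "y \<in> X"
      have "\<exists>!b. b\<in>B \<and> x\<in>b \<and> y\<in>b" using uniq a xy(3) by simp
      then show ?thesis using a xy by blast
    qed
    then have "i' = i" using cdisj ib e by blast
    then show "\<sigma> i b x \<noteq> \<sigma> i b y \<and> {\<sigma> i b x, \<sigma> i b y} \<in> edges (Hs!i)"
      using sw e \<open>b' = b\<close> by (auto simp: insert_commute)
  qed
  have Ecard: "card e = 2" if "e \<in> E" for e using that unfolding E_def by auto
  have "is_graph G"
    unfolding is_graph_def vG eG
  proof (intro conjI ballI)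
    show "finite X" by fact
    show "X \<noteq> {}" using x0 by blast
    fix e assume "e \<in> E"
    then show "e \<subseteq> X" unfolding E_def by auto
    show "card e = 2" using Ecard \<open>e \<in> E\<close> by blast
  qed
  moreover have "full G Hs"
    unfolding full_def vG
  proof (intro ballI)
    fix v H assume v: "v \<in> X" and H: "H \<in> set Hs"
    then obtain i where i: "i < t" "H = Hs!i" using t_def by (metis in_set_conv_nth)
    have "c i \<in> P" using c i by auto
    then have "\<Union>(c i) = X" using PM by (simp add: perfect_matching_def)
    then obtain b where b: "b \<in> c i" "v \<in> b" using v by blast
    have bX: "b \<subseteq> X" using cB[OF i(1) b(1)] Bb by auto
    let ?s = "\<sigma> i b"
    let ?V = "verts H"
    have sV: "?s ` b = ?V" using \<sigma> i b by simp
    define \<rho> where "\<rho> w = (if w = ?s v then v else (SOME y. y\<in>b \<and> ?s y = w))" for w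
    have \<rho>: "\<rho> w \<in> b \<and> ?s (\<rho> w) = w" if "w \<in> ?V" for w
    proof (cases "w = ?s v")
      case True then show ?thesis using b by (simp add: \<rho>_def)
    next
      case False
      have "\<exists>y. y\<in>b \<and> ?s y = w" using sV that by (metis imageE)
      then have "(SOME y. y\<in>b \<and> ?s y = w) \<in> b \<and> ?s (SOME y. y\<in>b \<and> ?s y = w) = w" by (rule someI_ex)
      then show ?thesis using False by (simp add: \<rho>_def)
    qed
    define S where "S = \<rho> ` ?V"
    have vS: "v \<in> S"
    proof -
      have "?s v \<in> ?V" using sV b by auto
      moreover have "\<rho> (?s v) = v" by (simp add: \<rho>_def)
      ultimately show ?thesis unfolding S_def by (metis image_eqI)
    qed
    have Sb: "S \<subseteq> b" using \<rho> S_def by auto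
    have inj: "inj_on ?s S"
      unfolding S_def by (rule inj_onI) (use \<rho> in auto)
    have img: "?s ` S = ?V"
    proof
      show "?s ` S \<subseteq> ?V" using Sb sV by auto
      show "?V \<subseteq> ?s ` S" unfolding S_def using \<rho> by (metis image_eqI subsetI)
    qed
    have bij: "bij_betw ?s S ?V" using inj img by (simp add: bij_betw_def)
    have Hg: "is_graph H" using assms(4) H by auto
    have ed: "{x, y} \<in> edges G \<longleftrightarrow> {?s x, ?s y} \<in> edges H" if "x \<in> S" "y \<in> S" for x y
    proof (cases "x = y")
      case True
      have "{x} \<notin> E" using Ecard by fastforce
      moreover have "{?s x} \<notin> edges H" using Hg by (auto simp: is_graph_def)
      ultimately show ?thesis using True eG by simp
    next
      case False
      then have "?s x \<noteq> ?s y" using inj that by (meson inj_on_def)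
      then show ?thesis using Echar[OF i(1) b(1), of x y] Sb that False eG i by auto
    qed
    have "induced_iso G S H"
      unfolding induced_iso_def vG using Sb bX bij ed by blast
    then show "\<exists>S. v \<in> S \<and> induced_iso G S H" using vS by blast
  qed
  moreover have "order G = n" using vG cardX by (simp add: order_def)
  ultimately show ?thesis using transfer_fmin[of G Hs] by simp
qed

end
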